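(* If $\sum_{i\in I}u_i$ is defined, then for any family $(v_i)_{i\in I}$ of elements of $U$, $\sum_{i\in I}u_i\cdot v_i$ is defined.
   Context: $\mathcal A=\langle U,+,\cdot,\mathbf 0,\mathbf 1\rangle$ is a partial semiring ($\langle U,+,\mathbf 0\rangle$ a commutative monoid with $+$ possibly partial; $\langle U,\cdot,\mathbf 1\rangle$ a monoid with total $\cdot$; two-sided distributivity; $\mathbf 0$ annihilates), naturally ordered ($u\le v$ iff $\exists w.\,u+w=v$ is a partial order), Scott continuous ($+$ and $\cdot$ preserve suprema of directed sets in each argument), and has a top element $\top$ with $\top\ge u$ for all $u\in U$. For an indexed family, $\sum_{i\in I}u_i$ is the supremum of all finite sums $u_{i_1}+\dots+u_{i_n}$ over finite $\{i_1,\dots,i_n\}\subseteq I$. *)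

theory Defs
  imports Main
begin

text \<open>A partial semiring on the whole type 'a: partial addition padd (None = undefined),
  total multiplication mult, constants zero and one.\<close>

definition oadd :: "('a \<Rightarrow> 'a \<Rightarrow> 'a option) \<Rightarrow> 'a option \<Rightarrow> 'a option \<Rightarrow> 'a option" where
  "oadd padd x y = (case x of None \<Rightarrow> None | Some a \<Rightarrow>
                      (case y of None \<Rightarrow> None | Some b \<Rightarrow> padd a b))"

definition partial_semiring ::
  "('a \<Rightarrow> 'a \<Rightarrow> 'a option) \<Rightarrow> ('a \<Rightarrow> 'a \<Rightarrow> 'a) \<Rightarrow> 'a \<Rightarrow> 'a \<Rightarrow> bool" where
  "partial_semiring padd mult zero one \<longleftrightarrow>
     (\<forall>x y. padd x y = padd y x) \<and>
     (\<forall>x y z. oadd padd (oadd padd (Some x) (Some y)) (Some z)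
             = oadd padd (Some x) (oadd padd (Some y) (Some z))) \<and>
     (\<forall>x. padd zero x = Some x) \<and>
     (\<forall>x y z. mult (mult x y) z = mult x (mult y z)) \<and>
     (\<forall>x. mult one x = x \<and> mult x one = x) \<and>
     (\<forall>x y z s. padd y z = Some s \<longrightarrow>
        padd (mult x y) (mult x z) = Some (mult x s) \<and>
        padd (mult y x) (mult z x) = Some (mult s x)) \<and>
     (\<forall>x. mult zero x = zero \<and> mult x zero = zero)"

definition nle :: "('a \<Rightarrow> 'a \<Rightarrow> 'a option) \<Rightarrow> 'a \<Rightarrow> 'a \<Rightarrow> bool" where
  "nle padd u v \<longleftrightarrow> (\<exists>w. padd u w = Some v)"

definition naturally_ordered :: "('a \<Rightarrow> 'a \<Rightarrow> 'a option) \<Rightarrow> bool" where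
  "naturally_ordered padd \<longleftrightarrow>
     (\<forall>x. nle padd x x) \<and>
     (\<forall>x y z. nle padd x y \<longrightarrow> nle padd y z \<longrightarrow> nle padd x z) \<and>
     (\<forall>x y. nle padd x y \<longrightarrow> nle padd y x \<longrightarrow> x = y)"

definition is_lub :: "('a \<Rightarrow> 'a \<Rightarrow> 'a option) \<Rightarrow> 'a set \<Rightarrow> 'a \<Rightarrow> bool" where
  "is_lub padd D s \<longleftrightarrow> (\<forall>d\<in>D. nle padd d s) \<and>
      (\<forall>t. (\<forall>d\<in>D. nle padd d t) \<longrightarrow> nle padd s t)"

definition directed :: "('a \<Rightarrow> 'a \<Rightarrow> 'a option) \<Rightarrow> 'a set \<Rightarrow> bool" where
  "directed padd D \<longleftrightarrow> D \<noteq> {} \<and>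
     (\<forall>x\<in>D. \<forall>y\<in>D. \<exists>z\<in>D. nle padd x z \<and> nle padd y z)"

definition scott_continuous ::
  "('a \<Rightarrow> 'a \<Rightarrow> 'a option) \<Rightarrow> ('a \<Rightarrow> 'a \<Rightarrow> 'a) \<Rightarrow> bool" where
  "scott_continuous padd mult \<longleftrightarrow>
     (\<forall>D. directed padd D \<longrightarrow> (\<exists>s. is_lub padd D s)) \<and>
     (\<forall>D s x. directed padd D \<longrightarrow> is_lub padd D s \<longrightarrow>
        (\<forall>d\<in>D. padd x d \<noteq> None) \<longrightarrow>
        (\<exists>r. padd x s = Some r \<and> is_lub padd {the (padd x d) | d. d \<in> D} r)) \<and>
     (\<forall>D s x. directed padd D \<longrightarrow> is_lub padd D s \<longrightarrow>
        (\<forall>d\<in>D. padd d x \<noteq> None) \<longrightarrow>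
        (\<exists>r. padd s x = Some r \<and> is_lub padd {the (padd d x) | d. d \<in> D} r)) \<and>
     (\<forall>D s x. directed padd D \<longrightarrow> is_lub padd D s \<longrightarrow>
        is_lub padd ((\<lambda>d. mult x d) ` D) (mult x s) \<and>
        is_lub padd ((\<lambda>d. mult d x) ` D) (mult s x))"

definition has_top :: "('a \<Rightarrow> 'a \<Rightarrow> 'a option) \<Rightarrow> bool" where
  "has_top padd \<longleftrightarrow> (\<exists>t. \<forall>u. nle padd u t)"

definition lsum :: "('a \<Rightarrow> 'a \<Rightarrow> 'a option) \<Rightarrow> 'a \<Rightarrow> ('i \<Rightarrow> 'a) \<Rightarrow> 'i list \<Rightarrow> 'a option" where
  "lsum padd zero u xs = foldr (\<lambda>i acc. oadd padd (Some (u i)) acc) xs (Some zero)"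

definition finite_sums :: "('a \<Rightarrow> 'a \<Rightarrow> 'a option) \<Rightarrow> 'a \<Rightarrow> ('i \<Rightarrow> 'a) \<Rightarrow> 'i set \<Rightarrow> 'a set" where
  "finite_sums padd zero u I = {s. \<exists>xs. distinct xs \<and> set xs \<subseteq> I \<and> lsum padd zero u xs = Some s}"

definition sum_defined :: "('a \<Rightarrow> 'a \<Rightarrow> 'a option) \<Rightarrow> 'a \<Rightarrow> ('i \<Rightarrow> 'a) \<Rightarrow> 'i set \<Rightarrow> bool" where
  "sum_defined padd zero u I \<longleftrightarrow>
     (\<forall>xs. distinct xs \<and> set xs \<subseteq> I \<longrightarrow> lsum padd zero u xs \<noteq> None) \<and>
     (\<exists>s. is_lub padd (finite_sums padd zero u I) s)"

end

theory Submission
  imports Defs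
begin

lemma oadd_eq_Some:
  "oadd p x y = Some s \<longleftrightarrow> (\<exists>a b. x = Some a \<and> y = Some b \<and> p a b = Some s)"
  by (cases x; cases y) (simp_all add: oadd_def)

lemma oadd_Some2: "oadd p (Some a) (Some b) = p a b"
  by (simp add: oadd_def)

locale PS =
  fixes padd :: "'a \<Rightarrow> 'a \<Rightarrow> 'a option" and mult :: "'a \<Rightarrow> 'a \<Rightarrow> 'a"
    and zero one :: 'a
  assumes ps: "partial_semiring padd mult zero one"
begin

lemma comm: "padd x y = padd y x" using ps unfolding partial_semiring_def by blast
lemma zl: "padd zero x = Some x" using ps unfolding partial_semiring_def by blast
lemma ass: "oadd padd (oadd padd (Some x) (Some y)) (Some z)
             = oadd padd (Some x) (oadd padd (Some y) (Some z))"
  using ps unfolding partial_semiring_def by blast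
lemma distl: "padd y z = Some s \<Longrightarrow> padd (mult x y) (mult x z) = Some (mult x s)"
  using ps unfolding partial_semiring_def by blast
lemma distr: "padd y z = Some s \<Longrightarrow> padd (mult y x) (mult z x) = Some (mult s x)"
  using ps unfolding partial_semiring_def by blast

sublocale S: comm_monoid_set "oadd padd" "Some zero"
proof
  fix a b c :: "'a option"
  show "oadd padd (oadd padd a b) c = oadd padd a (oadd padd b c)"
    using ass by (cases a; cases b; cases c) (simp_all add: oadd_def split: option.split)
  show "oadd padd a b = oadd padd b a"
    using comm by (cases a; cases b) (simp_all add: oadd_def)
  show "oadd padd a (Some zero) = a"
    using comm zl by (cases a) (simp_all add: oadd_def)
qed

lemma mono_add:
  assumes "padd a' c = Some a" "padd b' d = Some b" "padd a b = Some s"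
  shows "\<exists>s'. padd a' b' = Some s' \<and> nle padd s' s"
proof -
  have "oadd padd (oadd padd (Some a') (Some c)) (oadd padd (Some b') (Some d)) = Some s"
    using assms by (simp add: oadd_Some2)
  hence "oadd padd (oadd padd (Some a') (Some b')) (oadd padd (Some c) (Some d)) = Some s"
    by (simp only: S.assoc S.commute S.left_commute)
  then obtain s' e where "oadd padd (Some a') (Some b') = Some s'" "oadd padd (Some c) (Some d) = Some e"
    "padd s' e = Some s" unfolding oadd_eq_Some by blast
  thus ?thesis unfolding nle_def by (auto simp: oadd_Some2)
qed

lemma lsum_F: "distinct xs \<Longrightarrow> lsum padd zero u xs = S.F (\<lambda>i. Some (u i)) (set xs)"
  by (induction xs) (simp_all add: lsum_def)

lemma finite_sums_eq:
  "finite_sums padd zero u I = {s. \<exists>A. finite A \<and> A \<subseteq> I \<and> S.F (\<lambda>i. Some (u i)) A = Some s}"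
  unfolding finite_sums_def
  by (auto simp: lsum_F) (metis finite_distinct_list lsum_F)

lemma sub_nle:
  assumes "finite B" "A \<subseteq> B" "S.F g B = Some b" "S.F g A = Some a"
  shows "nle padd a b"
proof -
  have "S.F g B = oadd padd (S.F g (B - A)) (S.F g A)"
    using assms S.subset_diff by blast
  then have "oadd padd (S.F g (B - A)) (Some a) = Some b" using assms by simp
  then obtain w where "padd w a = Some b" unfolding oadd_eq_Some by blast
  then show ?thesis unfolding nle_def using comm by metis
qed

lemma prod_bound:
  assumes top: "\<forall>x. nle padd x t"
    and def: "\<forall>A. finite A \<and> A \<subseteq> I \<longrightarrow> S.F (\<lambda>i. Some (u i)) A \<noteq> None"
  shows "finite A \<Longrightarrow> A \<subseteq> I \<Longrightarrow> \<exists>a b. S.F (\<lambda>i. Some (mult (u i) (v i))) A = Some a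
       \<and> S.F (\<lambda>i. Some (u i)) A = Some b \<and> nle padd a (mult b t)"
proof (induction A rule: finite_induct)
  case empty
  then show ?case using zl by (simp add: nle_def distr)
next
  case (insert i A)
  then obtain a b where ab: "S.F (\<lambda>i. Some (mult (u i) (v i))) A = Some a"
    "S.F (\<lambda>i. Some (u i)) A = Some b" "nle padd a (mult b t)" by auto
  obtain s where s: "S.F (\<lambda>i. Some (u i)) (insert i A) = Some s"
    using def insert by blast
  hence s2: "padd (u i) b = Some s" using insert ab by (simp add: oadd_Some2)
  have d1: "padd (mult (u i) t) (mult b t) = Some (mult s t)" using distr[OF s2] .
  obtain w where "padd (v i) w = Some t" using top unfolding nle_def by blast
  hence d2: "padd (mult (u i) (v i)) (mult (u i) w) = Some (mult (u i) t)" by (rule distl)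
  obtain w2 where w2: "padd a w2 = Some (mult b t)" using ab unfolding nle_def by blast
  obtain s' where "padd (mult (u i) (v i)) a = Some s'" "nle padd s' (mult s t)"
    using mono_add[OF d2 w2 d1] by blast
  then show ?case using insert ab s by (simp add: oadd_Some2)
qed

end

theorem lemmaA2:
  fixes padd :: "'a \<Rightarrow> 'a \<Rightarrow> 'a option" and mult :: "'a \<Rightarrow> 'a \<Rightarrow> 'a"
    and zero one :: 'a and I :: "'i set" and u v :: "'i \<Rightarrow> 'a"
  assumes "partial_semiring padd mult zero one"
    and "naturally_ordered padd"
    and "scott_continuous padd mult"
    and "has_top padd"
    and "sum_defined padd zero u I"
  shows "sum_defined padd zero (\<lambda>i. mult (u i) (v i)) I"
proof -
  interpret PS padd mult zero one using assms(1) by unfold_locales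
  obtain t where top: "\<forall>x. nle padd x t" using assms(4) unfolding has_top_def by blast
  have def: "\<forall>A. finite A \<and> A \<subseteq> I \<longrightarrow> S.F (\<lambda>i. Some (u i)) A \<noteq> None"
    using assms(5) unfolding sum_defined_def by (metis finite_distinct_list lsum_F)
  have pb: "\<And>A. finite A \<Longrightarrow> A \<subseteq> I \<Longrightarrow> \<exists>a. S.F (\<lambda>i. Some (mult (u i) (v i))) A = Some a"
    using prod_bound[OF top def] by blast
  have part1: "\<forall>xs. distinct xs \<and> set xs \<subseteq> I \<longrightarrow> lsum padd zero (\<lambda>i. mult (u i) (v i)) xs \<noteq> None"
    using pb lsum_F by fastforce
  let ?D = "finite_sums padd zero (\<lambda>i. mult (u i) (v i)) I"
  have dir: "directed padd ?D"
    unfolding directed_def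
  proof
    have "Some zero = S.F (\<lambda>i. Some (mult (u i) (v i))) {}" by simp
    then show "?D \<noteq> {}" unfolding finite_sums_eq by (metis (mono_tags, lifting) empty_iff empty_subsetI finite.emptyI mem_Collect_eq)
    show "\<forall>x\<in>?D. \<forall>y\<in>?D. \<exists>z\<in>?D. nle padd x z \<and> nle padd y z"
    proof (intro ballI)
      fix x y assume "x \<in> ?D" "y \<in> ?D"
      then obtain A B where AB: "finite A" "A \<subseteq> I" "S.F (\<lambda>i. Some (mult (u i) (v i))) A = Some x"
        "finite B" "B \<subseteq> I" "S.F (\<lambda>i. Some (mult (u i) (v i))) B = Some y"
        unfolding finite_sums_eq by blast
      obtain z where z: "S.F (\<lambda>i. Some (mult (u i) (v i))) (A \<union> B) = Some z"
        using pb[of "A \<union> B"] AB by auto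
      have "z \<in> ?D" unfolding finite_sums_eq using z AB by blast
      moreover have "nle padd x z" using sub_nle[of "A \<union> B" A] AB z by auto
      moreover have "nle padd y z" using sub_nle[of "A \<union> B" B] AB z by auto
      ultimately show "\<exists>z\<in>?D. nle padd x z \<and> nle padd y z" by blast
    qed
  qed
  then obtain s where "is_lub padd ?D s" using assms(3) unfolding scott_continuous_def by blast
  then show ?thesis unfolding sum_defined_def using part1 by blast
qed

end
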